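(* Let $Q$ be an $[[n,k,d]]$ stabilizer code with codespace projector $P_Q$ whose Shor–Laflamme enumerators satisfy $A_{2i+1}=0$ for all $i$. Then $$\sum_{i=0}^n i\cdot 3^{-i}A_i\le\frac n4\,\frac{2^{n-k}}{3^n}\,B_n.$$
   Context: For an $[[n,k,d]]$ stabilizer code with projector $P_Q$ onto its $2^k$-dimensional codespace, the Shor–Laflamme enumerators are $A_i=\frac{1}{2^{2k}}\sum_{\sigma:w(\sigma)=i}\mathrm{Tr}[\sigma P_Q]\mathrm{Tr}[\sigma^\dagger P_Q]$ and $B_i=\frac{1}{2^k}\sum_{\sigma:w(\sigma)=i}\mathrm{Tr}[\sigma P_Q\sigma^\dagger P_Q]$, where $\sigma$ ranges over the $n$-qubit Pauli operators $\{\mathbb{1},X,Y,Z\}^{\otimes n}$ and $w(\sigma)$ is the number of non-identity tensor factors. *)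

theory Defs
  imports "Jordan_Normal_Form.Schur_Decomposition" "HOL-Library.Complex_Order"
begin

datatype pauli = PI | PX | PY | PZ

definition pauli_mat :: "pauli \<Rightarrow> complex mat" where
  "pauli_mat p = (case p of
      PI \<Rightarrow> mat_of_rows_list 2 [[1, 0], [0, 1]]
    | PX \<Rightarrow> mat_of_rows_list 2 [[0, 1], [1, 0]]
    | PY \<Rightarrow> mat_of_rows_list 2 [[0, - \<i>], [\<i>, 0]]
    | PZ \<Rightarrow> mat_of_rows_list 2 [[1, 0], [0, -1]])"

text \<open>A Pauli string of length n is a list of n single-qubit Paulis; qubit b
  corresponds to bit b of the computational basis index in {0..<2^n}.
  The matrix entry is the product of the single-qubit entries (Kronecker product).\<close>

definition pauli_string_mat :: "nat \<Rightarrow> pauli list \<Rightarrow> complex mat" where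
  "pauli_string_mat n \<sigma> = mat (2^n) (2^n)
     (\<lambda>(r, c). \<Prod>b<n. pauli_mat (\<sigma> ! b) $$ ((r div 2^b) mod 2, (c div 2^b) mod 2))"

definition pauli_strings :: "nat \<Rightarrow> pauli list set" where
  "pauli_strings n = {\<sigma>. length \<sigma> = n}"

definition pweight :: "pauli list \<Rightarrow> nat" where
  "pweight \<sigma> = length (filter (\<lambda>p. p \<noteq> PI) \<sigma>)"

definition pauli_group :: "nat \<Rightarrow> complex mat set" where
  "pauli_group n = {c \<cdot>\<^sub>m pauli_string_mat n \<sigma> | c \<sigma>.
      c \<in> {1, -1, \<i>, -\<i>} \<and> length \<sigma> = n}"

text \<open>A stabilizer group: an abelian subgroup of the n-qubit Pauli group not containing -1.
  (A nonempty finite subset of a group closed under multiplication is a subgroup.)\<close>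
definition stabilizer_group :: "nat \<Rightarrow> complex mat set \<Rightarrow> bool" where
  "stabilizer_group n S \<longleftrightarrow>
     S \<subseteq> pauli_group n \<and> 1\<^sub>m (2^n) \<in> S \<and>
     (\<forall>s\<in>S. \<forall>t\<in>S. s * t \<in> S) \<and>
     (\<forall>s\<in>S. \<forall>t\<in>S. s * t = t * s) \<and>
     - 1\<^sub>m (2^n) \<notin> S"

definition stabilizer_code :: "nat \<Rightarrow> nat \<Rightarrow> complex mat set \<Rightarrow> bool" where
  "stabilizer_code n k S \<longleftrightarrow> k \<le> n \<and> stabilizer_group n S \<and> card S = 2^(n-k)"

definition codespace :: "nat \<Rightarrow> complex mat set \<Rightarrow> complex vec set" where
  "codespace n S = {v \<in> carrier_vec (2^n). \<forall>s\<in>S. s *\<^sub>v v = v}"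

definition orth_projector_onto :: "nat \<Rightarrow> complex mat \<Rightarrow> complex vec set \<Rightarrow> bool" where
  "orth_projector_onto n P V \<longleftrightarrow>
     P \<in> carrier_mat (2^n) (2^n) \<and> P * P = P \<and> mat_adjoint P = P \<and>
     (\<lambda>v. P *\<^sub>v v) ` carrier_vec (2^n) = V"

definition mtrace :: "complex mat \<Rightarrow> complex" where
  "mtrace A = (\<Sum>i<dim_row A. A $$ (i, i))"

definition SL_A :: "nat \<Rightarrow> nat \<Rightarrow> complex mat \<Rightarrow> nat \<Rightarrow> complex" where
  "SL_A n k P i = 1 / 2^(2*k) *
     (\<Sum>\<sigma>\<in>{\<sigma>\<in>pauli_strings n. pweight \<sigma> = i}.
        mtrace (pauli_string_mat n \<sigma> * P) * mtrace (mat_adjoint (pauli_string_mat n \<sigma>) * P))"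

definition SL_B :: "nat \<Rightarrow> nat \<Rightarrow> complex mat \<Rightarrow> nat \<Rightarrow> complex" where
  "SL_B n k P i = 1 / 2^k *
     (\<Sum>\<sigma>\<in>{\<sigma>\<in>pauli_strings n. pweight \<sigma> = i}.
        mtrace (pauli_string_mat n \<sigma> * P * mat_adjoint (pauli_string_mat n \<sigma>) * P))"

end

theory Submission imports Defs begin

instance pauli :: finite
proof
  have "(UNIV :: pauli set) = {PI, PX, PY, PZ}" by (auto intro: pauli.exhaust)
  then show "finite (UNIV :: pauli set)" by (metis finite.emptyI finite_insert)
qed

lemma UNIV_pauli: "(UNIV :: pauli set) = {PI, PX, PY, PZ}" by (auto intro: pauli.exhaust)

lemma sum_pauli: "(\<Sum>q\<in>UNIV. f q) = f PI + f PX + f PY + f PZ"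
  by (simp add: UNIV_pauli add.assoc)

definition pm :: "pauli \<Rightarrow> nat \<Rightarrow> nat \<Rightarrow> complex" where
 "pm p x y = (case p of PI \<Rightarrow> (if x=y then 1 else 0) | PX \<Rightarrow> (if x\<noteq>y then 1 else 0)
   | PY \<Rightarrow> (if x=y then 0 else if x=0 then -\<i> else \<i>)
   | PZ \<Rightarrow> (if x\<noteq>y then 0 else if x=0 then 1 else -1))"

lemma lt2: "(x::nat) < 2 \<Longrightarrow> x = 0 \<or> x = 1" by auto

lemma pauli_mat_entry: "x<2 \<Longrightarrow> y<2 \<Longrightarrow> pauli_mat p $$ (x,y) = pm p x y"
  apply (drule lt2)+
  by (cases p) (auto simp: pauli_mat_def pm_def mat_of_rows_list_def)

lemma pm_herm: "x<2 \<Longrightarrow> y<2 \<Longrightarrow> cnj (pm p y x) = pm p x y"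
  apply (drule lt2)+
  by (cases p) (auto simp: pm_def)

definition qbit :: "nat \<Rightarrow> nat \<Rightarrow> nat" where "qbit l r = (r div 2^l) mod 2"

lemma qbit_lt: "qbit l r < 2" by (simp add: qbit_def)

lemma psm_dim[simp]: "dim_row (pauli_string_mat n \<sigma>) = 2^n" "dim_col (pauli_string_mat n \<sigma>) = 2^n"
  by (auto simp: pauli_string_mat_def)

lemma psm_carrier: "pauli_string_mat n \<sigma> \<in> carrier_mat (2^n) (2^n)"
  by (rule carrier_matI) (simp_all only: psm_dim)

lemma psm_entry: "r<2^n \<Longrightarrow> c<2^n \<Longrightarrow>
   pauli_string_mat n \<sigma> $$ (r,c) = (\<Prod>l<n. pm (\<sigma>!l) (qbit l r) (qbit l c))"
proof -
  assume rc: "r<2^n" "c<2^n"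
  have "pauli_string_mat n \<sigma> $$ (r,c) = (\<Prod>b<n. pauli_mat (\<sigma>!b) $$ ((r div 2^b) mod 2, (c div 2^b) mod 2))"
    using rc unfolding pauli_string_mat_def by (subst index_mat) auto
  also have "\<dots> = (\<Prod>l<n. pm (\<sigma>!l) (qbit l r) (qbit l c))"
    by (rule prod.cong) (auto simp: qbit_def intro: pauli_mat_entry)
  finally show ?thesis .
qed

lemma adj_dim[simp]: "dim_row (mat_adjoint A) = dim_col A" "dim_col (mat_adjoint A) = dim_row A"
  by (auto simp: mat_adjoint_def mat_of_rows_def)

lemma adj_entry: "i < dim_col A \<Longrightarrow> j < dim_row A \<Longrightarrow> mat_adjoint A $$ (i,j) = cnj (A $$ (j,i))"
  by (simp add: mat_adjoint_def mat_of_rows_def)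

lemma psm_adj: "mat_adjoint (pauli_string_mat n \<sigma>) = pauli_string_mat n \<sigma>"
proof (rule eq_matI)
  fix i j assume i: "i < dim_row (pauli_string_mat n \<sigma>)" and j: "j < dim_col (pauli_string_mat n \<sigma>)"
  then show "mat_adjoint (pauli_string_mat n \<sigma>) $$ (i, j) = pauli_string_mat n \<sigma> $$ (i, j)"
    by (simp add: adj_entry psm_entry pm_herm qbit_lt)
qed auto


lemma mult_entry: "A \<in> carrier_mat N M \<Longrightarrow> B \<in> carrier_mat M K \<Longrightarrow> i<N \<Longrightarrow> j<K \<Longrightarrow>
   (A*B)$$(i,j) = (\<Sum>l<M. A$$(i,l)*B$$(l,j))"
  by (simp add: index_mult_mat scalar_prod_def atLeast0LessThan)


definition PT :: "nat \<Rightarrow> (nat \<Rightarrow> pauli set) \<Rightarrow> pauli list set" where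
  "PT n T = {\<sigma>. length \<sigma> = n \<and> (\<forall>l<n. \<sigma>!l \<in> T l)}"

lemma PT_Suc: "PT (Suc n) T = (\<lambda>(p,\<sigma>). p#\<sigma>) ` (T 0 \<times> PT n (\<lambda>l. T (Suc l)))"
proof (intro equalityI subsetI)
  fix \<sigma> assume "\<sigma> \<in> PT (Suc n) T"
  then have len: "length \<sigma> = Suc n" and mem: "\<forall>l<Suc n. \<sigma>!l \<in> T l" by (auto simp: PT_def)
  from len obtain p \<tau> where s: "\<sigma> = p#\<tau>" and lt: "length \<tau> = n" by (auto simp: length_Suc_conv)
  have "p \<in> T 0" using mem s by force
  moreover have "\<forall>l<n. \<tau>!l \<in> T (Suc l)" using mem s by force
  ultimately show "\<sigma> \<in> (\<lambda>(p,\<sigma>). p#\<sigma>) ` (T 0 \<times> PT n (\<lambda>l. T (Suc l)))"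
    using s lt by (auto simp: PT_def image_iff)
next
  fix \<sigma> assume "\<sigma> \<in> (\<lambda>(p,\<sigma>). p#\<sigma>) ` (T 0 \<times> PT n (\<lambda>l. T (Suc l)))"
  then obtain p \<tau> where s: "\<sigma> = p#\<tau>" and p: "p \<in> T 0" and t: "\<tau> \<in> PT n (\<lambda>l. T (Suc l))" by auto
  show "\<sigma> \<in> PT (Suc n) T"
    unfolding PT_def
  proof (intro CollectI conjI allI impI)
    show "length \<sigma> = Suc n" using s t by (simp add: PT_def)
    fix l assume "l < Suc n"
    then show "\<sigma>!l \<in> T l" using s p t by (cases l) (auto simp: PT_def)
  qed
qed

lemma finite_PT: "finite (PT n T)"
proof -
  have "PT n T \<subseteq> {xs. set xs \<subseteq> (UNIV :: pauli set) \<and> length xs = n}"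
    unfolding PT_def by (intro subsetI) simp
  moreover have "finite {xs. set xs \<subseteq> (UNIV :: pauli set) \<and> length xs = n}"
    by (rule finite_lists_length_eq) simp
  ultimately show ?thesis by (rule finite_subset)
qed

lemma sum_prod_PT:
  "(\<Sum>\<sigma>\<in>PT n T. \<Prod>l<n. f l (\<sigma>!l)) = (\<Prod>l<n. \<Sum>p\<in>T l. (f l p :: complex))"
proof (induction n arbitrary: T f)
  case 0
  have "PT 0 T = {[]}" by (auto simp: PT_def)
  then show ?case by simp
next
  case (Suc n)
  let ?S = "PT n (\<lambda>l. T (Suc l))"
  have inj: "inj_on (\<lambda>(p,\<sigma>). p#\<sigma>) (T 0 \<times> ?S)"
    by (auto simp: inj_on_def)
  have "(\<Sum>\<sigma>\<in>PT (Suc n) T. \<Prod>l<Suc n. f l (\<sigma>!l))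
      = (\<Sum>x\<in>T 0 \<times> ?S. \<Prod>l<Suc n. f l ((\<lambda>(p,\<sigma>). p#\<sigma>) x ! l))"
    unfolding PT_Suc sum.reindex[OF inj] o_def ..
  also have "\<dots> = (\<Sum>x\<in>T 0 \<times> ?S. f 0 (fst x) * (\<Prod>l<n. f (Suc l) (snd x ! l)))"
  proof (rule sum.cong[OF refl])
    fix x assume "x \<in> T 0 \<times> ?S"
    obtain p \<sigma> where x: "x = (p,\<sigma>)" by (cases x)
    show "(\<Prod>l<Suc n. f l ((\<lambda>(p,\<sigma>). p#\<sigma>) x ! l)) = f 0 (fst x) * (\<Prod>l<n. f (Suc l) (snd x ! l))"
      unfolding x prod.lessThan_Suc_shift by simp
  qed
  also have "\<dots> = (\<Sum>p\<in>T 0. \<Sum>\<sigma>\<in>?S. f 0 p * (\<Prod>l<n. f (Suc l) (\<sigma> ! l)))"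
    unfolding sum.cartesian_product by (rule sum.cong[OF refl]) (simp add: case_prod_beta)
  also have "\<dots> = (\<Sum>p\<in>T 0. f 0 p) * (\<Sum>\<sigma>\<in>?S. (\<Prod>l<n. f (Suc l) (\<sigma> ! l)))"
    by (rule sum_product[symmetric])
  also have "\<dots> = (\<Sum>p\<in>T 0. f 0 p) * (\<Prod>l<n. \<Sum>p\<in>T (Suc l). f (Suc l) p)"
    unfolding Suc.IH[where T="\<lambda>l. T (Suc l)" and f="\<lambda>l. f (Suc l)"] ..
  also have "\<dots> = (\<Prod>l<Suc n. \<Sum>p\<in>T l. f l p)"
    unfolding prod.lessThan_Suc_shift ..
  finally show ?case .
qed

lemma tr2: "A \<in> carrier_mat N N \<Longrightarrow> B \<in> carrier_mat N N \<Longrightarrow>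
   mtrace (A*B) = (\<Sum>i<N. \<Sum>l<N. A$$(i,l)*B$$(l,i))"
proof -
  assume c: "A \<in> carrier_mat N N" "B \<in> carrier_mat N N"
  have d: "dim_row (A*B) = N" using c by simp
  show ?thesis unfolding mtrace_def d by (rule sum.cong[OF refl], rule mult_entry[OF c]) auto
qed

lemma tr4: "A \<in> carrier_mat N N \<Longrightarrow> B \<in> carrier_mat N N \<Longrightarrow> C \<in> carrier_mat N N \<Longrightarrow> D \<in> carrier_mat N N \<Longrightarrow>
   mtrace (A*B*C*D) = (\<Sum>i<N. \<Sum>d<N. \<Sum>r<N. \<Sum>c<N. A$$(i,c)*B$$(c,r)*C$$(r,d)*D$$(d,i))"
proof -
  assume c: "A \<in> carrier_mat N N" "B \<in> carrier_mat N N" "C \<in> carrier_mat N N" "D \<in> carrier_mat N N"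
  have AB: "A*B \<in> carrier_mat N N" using c by auto
  have ABC: "A*B*C \<in> carrier_mat N N" using c by auto
  show ?thesis
    unfolding tr2[OF ABC c(4)]
    apply (rule sum.cong, rule refl, rule sum.cong, rule refl)
    apply (subst mult_entry[OF AB c(3)], simp, simp)
    apply (simp add: sum_distrib_right)
    apply (rule sum.cong, rule refl)
    apply (subst mult_entry[OF c(1) c(2)], simp, simp)
    apply (simp add: sum_distrib_right)
    done
qed


definition comm :: "pauli \<Rightarrow> pauli \<Rightarrow> complex" where
  "comm p q = (if p = PI \<or> q = PI \<or> p = q then 1 else -1)"

definition chi :: "pauli set \<Rightarrow> pauli \<Rightarrow> complex" where
  "chi T q = (\<Sum>p\<in>T. comm p q)"

lemma qubit1: "a<2 \<Longrightarrow> b<2 \<Longrightarrow> c<2 \<Longrightarrow> d<2 \<Longrightarrow>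
  pm p a b * pm p c d = (1/2) * (\<Sum>q\<in>UNIV. comm p q * pm q c b * pm q a d)"
  apply (drule lt2)+
  by (cases p) (auto simp: sum_pauli pm_def comm_def)

lemma qubitT: "a<2 \<Longrightarrow> b<2 \<Longrightarrow> c<2 \<Longrightarrow> d<2 \<Longrightarrow>
  2 * (\<Sum>p\<in>T. pm p a b * pm p c d) = (\<Sum>q\<in>UNIV. chi T q * pm q c b * pm q a d)"
proof -
  assume abcd: "a<2" "b<2" "c<2" "d<2"
  have "2 * (\<Sum>p\<in>T. pm p a b * pm p c d) = (\<Sum>p\<in>T. \<Sum>q\<in>UNIV. comm p q * pm q c b * pm q a d)"
    unfolding sum_distrib_left by (rule sum.cong[OF refl]) (simp add: qubit1[OF abcd])
  also have "\<dots> = (\<Sum>q\<in>UNIV. \<Sum>p\<in>T. comm p q * pm q c b * pm q a d)"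
    by (rule sum.swap)
  also have "\<dots> = (\<Sum>q\<in>UNIV. chi T q * pm q c b * pm q a d)"
    unfolding chi_def sum_distrib_right ..
  finally show ?thesis .
qed


abbreviation sm :: "nat \<Rightarrow> pauli list \<Rightarrow> complex mat" where "sm \<equiv> pauli_string_mat"

lemma K1: "i<2^n \<Longrightarrow> c<2^n \<Longrightarrow> r<2^n \<Longrightarrow> d<2^n \<Longrightarrow>
  (\<Sum>\<sigma>\<in>PT n T. sm n \<sigma> $$ (i,c) * sm n \<sigma> $$ (r,d))
   = (\<Prod>l<n. \<Sum>p\<in>T l. pm p (qbit l i) (qbit l c) * pm p (qbit l r) (qbit l d))"
proof -
  assume a: "i<2^n" "c<2^n" "r<2^n" "d<2^n"
  have "(\<Sum>\<sigma>\<in>PT n T. sm n \<sigma> $$ (i,c) * sm n \<sigma> $$ (r,d))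
     = (\<Sum>\<sigma>\<in>PT n T. \<Prod>l<n. pm (\<sigma>!l) (qbit l i) (qbit l c) * pm (\<sigma>!l) (qbit l r) (qbit l d))"
    by (rule sum.cong[OF refl]) (simp add: psm_entry a prod.distrib)
  also have "\<dots> = (\<Prod>l<n. \<Sum>p\<in>T l. pm p (qbit l i) (qbit l c) * pm p (qbit l r) (qbit l d))"
    by (rule sum_prod_PT)
  finally show ?thesis .
qed

lemma K2: "i<2^n \<Longrightarrow> c<2^n \<Longrightarrow> r<2^n \<Longrightarrow> d<2^n \<Longrightarrow>
  (\<Sum>\<sigma>\<in>PT n (\<lambda>_. UNIV). sm n \<sigma> $$ (i,c) * sm n \<sigma> $$ (r,d) * (\<Prod>l<n. chi (T l) (\<sigma>!l)))
   = (\<Prod>l<n. \<Sum>p\<in>UNIV. chi (T l) p * pm p (qbit l i) (qbit l c) * pm p (qbit l r) (qbit l d))"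
proof -
  assume a: "i<2^n" "c<2^n" "r<2^n" "d<2^n"
  have "(\<Sum>\<sigma>\<in>PT n (\<lambda>_. UNIV). sm n \<sigma> $$ (i,c) * sm n \<sigma> $$ (r,d) * (\<Prod>l<n. chi (T l) (\<sigma>!l)))
     = (\<Sum>\<sigma>\<in>PT n (\<lambda>_. UNIV). \<Prod>l<n. chi (T l) (\<sigma>!l) * pm (\<sigma>!l) (qbit l i) (qbit l c) * pm (\<sigma>!l) (qbit l r) (qbit l d))"
    by (rule sum.cong[OF refl]) (simp add: psm_entry a prod.distrib mult_ac)
  also have "\<dots> = (\<Prod>l<n. \<Sum>p\<in>UNIV. chi (T l) p * pm p (qbit l i) (qbit l c) * pm p (qbit l r) (qbit l d))"
    by (rule sum_prod_PT)
  finally show ?thesis .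
qed

lemma K12: "i<2^n \<Longrightarrow> c<2^n \<Longrightarrow> r<2^n \<Longrightarrow> d<2^n \<Longrightarrow>
  2^n * (\<Sum>\<sigma>\<in>PT n T. sm n \<sigma> $$ (i,c) * sm n \<sigma> $$ (r,d))
  = (\<Sum>\<sigma>\<in>PT n (\<lambda>_. UNIV). sm n \<sigma> $$ (r,c) * sm n \<sigma> $$ (i,d) * (\<Prod>l<n. chi (T l) (\<sigma>!l)))"
proof -
  assume a: "i<2^n" "c<2^n" "r<2^n" "d<2^n"
  have "(2::complex)^n = (\<Prod>l<n. 2)" by simp
  then have "2^n * (\<Sum>\<sigma>\<in>PT n T. sm n \<sigma> $$ (i,c) * sm n \<sigma> $$ (r,d))
     = (\<Prod>l<n. 2 * (\<Sum>p\<in>T l. pm p (qbit l i) (qbit l c) * pm p (qbit l r) (qbit l d)))"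
    by (simp add: K1[OF a] prod.distrib)
  also have "\<dots> = (\<Prod>l<n. \<Sum>p\<in>UNIV. chi (T l) p * pm p (qbit l r) (qbit l c) * pm p (qbit l i) (qbit l d))"
    by (rule prod.cong[OF refl]) (rule qubitT, simp_all add: qbit_lt)
  also have "\<dots> = (\<Sum>\<sigma>\<in>PT n (\<lambda>_. UNIV). sm n \<sigma> $$ (r,c) * sm n \<sigma> $$ (i,d) * (\<Prod>l<n. chi (T l) (\<sigma>!l)))"
    by (rule K2[symmetric]) (use a in auto)
  finally show ?thesis .
qed

lemma swap4: "(\<Sum>s\<in>S. \<Sum>i\<in>A. \<Sum>d\<in>B. \<Sum>r\<in>C. \<Sum>c\<in>D. f s i d r c) =
   (\<Sum>i\<in>A. \<Sum>d\<in>B. \<Sum>r\<in>C. \<Sum>c\<in>D. \<Sum>s\<in>S. f s i d r c)"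
  apply (rule trans[OF sum.swap], rule sum.cong[OF refl])
  apply (rule trans[OF sum.swap], rule sum.cong[OF refl])
  apply (rule trans[OF sum.swap], rule sum.cong[OF refl])
  apply (rule sum.swap)
  done

lemma prod4: "(\<Sum>r\<in>A. \<Sum>c\<in>B. a r c) * (\<Sum>i\<in>C. \<Sum>d\<in>D. b i d) * (x::complex)
   = (\<Sum>r\<in>A. \<Sum>c\<in>B. \<Sum>i\<in>C. \<Sum>d\<in>D. a r c * b i d * x)"
proof -
  have "(\<Sum>r\<in>A. \<Sum>c\<in>B. a r c) * (\<Sum>i\<in>C. \<Sum>d\<in>D. b i d) * x
     = (\<Sum>r\<in>A. \<Sum>c\<in>B. a r c * ((\<Sum>i\<in>C. \<Sum>d\<in>D. b i d) * x))"
    by (simp add: sum_distrib_right mult.assoc)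
  also have "\<dots> = (\<Sum>r\<in>A. \<Sum>c\<in>B. \<Sum>i\<in>C. \<Sum>d\<in>D. a r c * b i d * x)"
    by (simp add: sum_distrib_right sum_distrib_left mult.assoc)
  finally show ?thesis .
qed

lemma swap_pairs: "(\<Sum>a\<in>A. \<Sum>b\<in>B. \<Sum>c\<in>C. \<Sum>d\<in>D. f a b c d) =
   (\<Sum>c\<in>C. \<Sum>d\<in>D. \<Sum>a\<in>A. \<Sum>b\<in>B. f a b c d)"
proof -
  have "(\<Sum>a\<in>A. \<Sum>b\<in>B. \<Sum>c\<in>C. \<Sum>d\<in>D. f a b c d) = (\<Sum>a\<in>A. \<Sum>c\<in>C. \<Sum>b\<in>B. \<Sum>d\<in>D. f a b c d)"
    by (rule sum.cong[OF refl]) (rule sum.swap)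
  also have "\<dots> = (\<Sum>c\<in>C. \<Sum>a\<in>A. \<Sum>b\<in>B. \<Sum>d\<in>D. f a b c d)"
    by (rule sum.swap)
  also have "\<dots> = (\<Sum>c\<in>C. \<Sum>a\<in>A. \<Sum>d\<in>D. \<Sum>b\<in>B. f a b c d)"
    by (rule sum.cong[OF refl], rule sum.cong[OF refl]) (rule sum.swap)
  also have "\<dots> = (\<Sum>c\<in>C. \<Sum>d\<in>D. \<Sum>a\<in>A. \<Sum>b\<in>B. f a b c d)"
    by (rule sum.cong[OF refl]) (rule sum.swap)
  finally show ?thesis .
qed

lemma key:
  assumes P: "P \<in> carrier_mat (2^n) (2^n)"
  shows "2^n * (\<Sum>\<sigma>\<in>PT n T. mtrace (sm n \<sigma> * P * sm n \<sigma> * P))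
    = (\<Sum>\<tau>\<in>PT n (\<lambda>_. UNIV). mtrace (sm n \<tau> * P) * mtrace (sm n \<tau> * P) * (\<Prod>l<n. chi (T l) (\<tau>!l)))"
proof -
  define N where "N = (2::nat)^n"
  have S: "\<And>\<sigma>. sm n \<sigma> \<in> carrier_mat N N" unfolding N_def by (rule psm_carrier)
  have PN: "P \<in> carrier_mat N N" using P unfolding N_def .
  define X where "X = (\<lambda>\<tau>. (\<Prod>l<n. chi (T l) (\<tau>!l)))"
  have "(\<Sum>\<sigma>\<in>PT n T. mtrace (sm n \<sigma> * P * sm n \<sigma> * P))
     = (\<Sum>\<sigma>\<in>PT n T. \<Sum>i<N. \<Sum>d<N. \<Sum>r<N. \<Sum>c<N. sm n \<sigma> $$ (i,c) * P $$ (c,r) * sm n \<sigma> $$ (r,d) * P $$ (d,i))"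
    by (rule sum.cong[OF refl]) (rule tr4[OF S PN S PN])
  also have "\<dots> = (\<Sum>i<N. \<Sum>d<N. \<Sum>r<N. \<Sum>c<N. \<Sum>\<sigma>\<in>PT n T. sm n \<sigma> $$ (i,c) * P $$ (c,r) * sm n \<sigma> $$ (r,d) * P $$ (d,i))"
    by (rule swap4)
  also have "\<dots> = (\<Sum>i<N. \<Sum>d<N. \<Sum>r<N. \<Sum>c<N. P $$ (c,r) * P $$ (d,i) * (\<Sum>\<sigma>\<in>PT n T. sm n \<sigma> $$ (i,c) * sm n \<sigma> $$ (r,d)))"
    by (simp add: sum_distrib_left mult_ac)
  finally have L: "2^n * (\<Sum>\<sigma>\<in>PT n T. mtrace (sm n \<sigma> * P * sm n \<sigma> * P))
     = (\<Sum>i<N. \<Sum>d<N. \<Sum>r<N. \<Sum>c<N. P $$ (c,r) * P $$ (d,i) * (2^n * (\<Sum>\<sigma>\<in>PT n T. sm n \<sigma> $$ (i,c) * sm n \<sigma> $$ (r,d))))"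
    by (simp add: sum_distrib_left mult_ac)
  have "(\<Sum>\<tau>\<in>PT n (\<lambda>_. UNIV). mtrace (sm n \<tau> * P) * mtrace (sm n \<tau> * P) * X \<tau>)
     = (\<Sum>\<tau>\<in>PT n (\<lambda>_. UNIV). (\<Sum>r<N. \<Sum>c<N. sm n \<tau> $$ (r,c) * P $$ (c,r)) * (\<Sum>i<N. \<Sum>d<N. sm n \<tau> $$ (i,d) * P $$ (d,i)) * X \<tau>)"
    by (rule sum.cong[OF refl]) (simp add: tr2[OF S PN])
  also have "\<dots> = (\<Sum>\<tau>\<in>PT n (\<lambda>_. UNIV). \<Sum>r<N. \<Sum>c<N. \<Sum>i<N. \<Sum>d<N. sm n \<tau> $$ (r,c) * P $$ (c,r) * (sm n \<tau> $$ (i,d) * P $$ (d,i)) * X \<tau>)"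
    by (rule sum.cong[OF refl]) (rule prod4)
  also have "\<dots> = (\<Sum>r<N. \<Sum>c<N. \<Sum>i<N. \<Sum>d<N. \<Sum>\<tau>\<in>PT n (\<lambda>_. UNIV). sm n \<tau> $$ (r,c) * P $$ (c,r) * (sm n \<tau> $$ (i,d) * P $$ (d,i)) * X \<tau>)"
    by (rule swap4)
  also have "\<dots> = (\<Sum>r<N. \<Sum>c<N. \<Sum>i<N. \<Sum>d<N. P $$ (c,r) * P $$ (d,i) * (\<Sum>\<tau>\<in>PT n (\<lambda>_. UNIV). sm n \<tau> $$ (r,c) * sm n \<tau> $$ (i,d) * X \<tau>))"
    by (simp add: sum_distrib_left mult_ac)
  also have "\<dots> = (\<Sum>i<N. \<Sum>d<N. \<Sum>r<N. \<Sum>c<N. P $$ (c,r) * P $$ (d,i) * (\<Sum>\<tau>\<in>PT n (\<lambda>_. UNIV). sm n \<tau> $$ (r,c) * sm n \<tau> $$ (i,d) * X \<tau>))"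
    by (rule swap_pairs)
  finally have R: "(\<Sum>\<tau>\<in>PT n (\<lambda>_. UNIV). mtrace (sm n \<tau> * P) * mtrace (sm n \<tau> * P) * X \<tau>)
     = (\<Sum>i<N. \<Sum>d<N. \<Sum>r<N. \<Sum>c<N. P $$ (c,r) * P $$ (d,i) * (\<Sum>\<tau>\<in>PT n (\<lambda>_. UNIV). sm n \<tau> $$ (r,c) * sm n \<tau> $$ (i,d) * X \<tau>))" .
  have M: "(\<Sum>i<N. \<Sum>d<N. \<Sum>r<N. \<Sum>c<N. P $$ (c,r) * P $$ (d,i) * (2^n * (\<Sum>\<sigma>\<in>PT n T. sm n \<sigma> $$ (i,c) * sm n \<sigma> $$ (r,d))))
     = (\<Sum>i<N. \<Sum>d<N. \<Sum>r<N. \<Sum>c<N. P $$ (c,r) * P $$ (d,i) * (\<Sum>\<tau>\<in>PT n (\<lambda>_. UNIV). sm n \<tau> $$ (r,c) * sm n \<tau> $$ (i,d) * X \<tau>))"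
    apply (rule sum.cong[OF refl])+
    apply (subst K12)
    apply (simp_all add: N_def X_def)
    done
  have R': "(\<Sum>\<tau>\<in>PT n (\<lambda>_. UNIV). mtrace (sm n \<tau> * P) * mtrace (sm n \<tau> * P) * (\<Prod>l<n. chi (T l) (\<tau>!l)))
     = (\<Sum>i<N. \<Sum>d<N. \<Sum>r<N. \<Sum>c<N. P $$ (c,r) * P $$ (d,i) * (\<Sum>\<tau>\<in>PT n (\<lambda>_. UNIV). sm n \<tau> $$ (r,c) * sm n \<tau> $$ (i,d) * X \<tau>))"
    using R unfolding X_def .
  show ?thesis by (simp only: L M R')
qed


lemma trace_comm: "A \<in> carrier_mat N N \<Longrightarrow> B \<in> carrier_mat N N \<Longrightarrow> mtrace (A*B) = mtrace (B*A)"
proof -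
  assume c: "A \<in> carrier_mat N N" "B \<in> carrier_mat N N"
  have "mtrace (A*B) = (\<Sum>i<N. \<Sum>l<N. A$$(i,l)*B$$(l,i))" by (rule tr2[OF c])
  also have "\<dots> = (\<Sum>l<N. \<Sum>i<N. B$$(l,i)*A$$(i,l))" by (subst sum.swap) (simp add: mult.commute)
  also have "\<dots> = mtrace (B*A)" by (rule tr2[OF c(2) c(1), symmetric])
  finally show ?thesis .
qed

lemma adj_carrier: "A \<in> carrier_mat N M \<Longrightarrow> mat_adjoint A \<in> carrier_mat M N"
  by (rule carrier_matI) auto

lemma adjoint_mult: fixes A B :: "complex mat" shows "A \<in> carrier_mat N N \<Longrightarrow> B \<in> carrier_mat N N \<Longrightarrow>
   mat_adjoint (A*B) = mat_adjoint B * mat_adjoint A"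
proof -
  assume c: "A \<in> carrier_mat N N" "B \<in> carrier_mat N N"
  have dA: "dim_row A = N" "dim_col A = N" using c by auto
  have dB: "dim_row B = N" "dim_col B = N" using c by auto
  show ?thesis
  proof (rule eq_matI)
    fix i j assume i: "i < dim_row (mat_adjoint B * mat_adjoint A)" and j: "j < dim_col (mat_adjoint B * mat_adjoint A)"
    then have i': "i < N" and j': "j < N" using dA dB by auto
    have "mat_adjoint (A*B) $$ (i,j) = cnj ((A*B) $$ (j,i))"
      by (rule adj_entry) (use i' j' dA dB in auto)
    also have "\<dots> = cnj (\<Sum>l<N. A$$(j,l)*B$$(l,i))" by (subst mult_entry[OF c]) (use i' j' in auto)
    also have "\<dots> = (\<Sum>l<N. mat_adjoint B $$ (i,l) * mat_adjoint A $$ (l,j))"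
      by (simp add: adj_entry dA dB i' j' mult.commute)
    also have "\<dots> = (mat_adjoint B * mat_adjoint A) $$ (i,j)"
      by (rule mult_entry[symmetric]) (use adj_carrier c i' j' in auto)
    finally show "mat_adjoint (A*B) $$ (i,j) = (mat_adjoint B * mat_adjoint A) $$ (i,j)" .
  qed (use dA dB in auto)
qed

lemma tr_pos: "Y \<in> carrier_mat N N \<Longrightarrow> 0 \<le> mtrace (Y * mat_adjoint Y)"
proof -
  assume c: "Y \<in> carrier_mat N N"
  have d: "dim_row Y = N" "dim_col Y = N" using c by auto
  have "mtrace (Y * mat_adjoint Y) = (\<Sum>i<N. \<Sum>l<N. Y$$(i,l) * cnj (Y$$(i,l)))"
    by (subst tr2[OF c adj_carrier[OF c]]) (simp add: adj_entry d)
  also have "\<dots> = (\<Sum>i<N. \<Sum>l<N. complex_of_real ((cmod (Y$$(i,l)))^2))"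
    by (simp only: complex_norm_square)
  also have "0 \<le> \<dots>"
    by (intro sum_nonneg) (simp add: less_eq_complex_def)
  finally show ?thesis .
qed

lemma multN: "A \<in> carrier_mat N N \<Longrightarrow> B \<in> carrier_mat N N \<Longrightarrow> A*B \<in> carrier_mat N N"
  by auto

lemma assocN: "A \<in> carrier_mat N N \<Longrightarrow> B \<in> carrier_mat N N \<Longrightarrow> C \<in> carrier_mat N N \<Longrightarrow> A*B*C = A*(B*C)"
  by (rule assoc_mult_mat) auto

lemma b_nonneg:
  assumes S: "S \<in> carrier_mat N N" "mat_adjoint S = S"
    and P: "P \<in> carrier_mat N N" "P*P = P" "mat_adjoint P = P"
  shows "0 \<le> mtrace (S*P*S*P)"
proof -
  have SP: "S*P \<in> carrier_mat N N" using S P by auto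
  have PS: "P*S \<in> carrier_mat N N" using S P by auto
  have Yc: "P*S*P \<in> carrier_mat N N" using S P by auto
  have PPX: "\<And>X. X \<in> carrier_mat N N \<Longrightarrow> P*(P*X) = P*X"
    using P by (metis assoc_mult_mat)
  have adjY: "mat_adjoint (P*S*P) = P*S*P"
    using adjoint_mult[OF PS P(1)] adjoint_mult[OF P(1) S(1)] S P
    by simp
  have SPS: "S*P*S \<in> carrier_mat N N" using S P by auto
  have "S*P*S*P*P = S*P*S*(P*P)" by (rule assoc_mult_mat[OF SPS P(1) P(1)])
  then have e1: "S*P*S*P = S*P*S*P*P" unfolding P(2) by simp
  have e2: "P*(S*P*S*P) = P*S*P*(P*S*P)"
    using S P by (simp add: PPX multN assocN del: assoc_mult_mat)
  have "mtrace (S*P*S*P) = mtrace (S*P*S*P*P)" using e1 by simp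
  also have "\<dots> = mtrace (P*(S*P*S*P))" by (rule trace_comm) (use S P in auto)
  also have "\<dots> = mtrace ((P*S*P) * mat_adjoint (P*S*P))" unfolding e2 adjY ..
  finally show ?thesis using tr_pos[OF Yc] by simp
qed


lemma PS_eq: "pauli_strings n = PT n (\<lambda>_. UNIV)"
  by (auto simp: pauli_strings_def PT_def)

lemma pweight_full: "pweight \<sigma> = length \<sigma> \<longleftrightarrow> (\<forall>x\<in>set \<sigma>. x \<noteq> PI)"
proof
  assume "pweight \<sigma> = length \<sigma>"
  then show "\<forall>x\<in>set \<sigma>. x \<noteq> PI" unfolding pweight_def
    using length_filter_less[of _ \<sigma> "\<lambda>p. p \<noteq> PI"] by fastforce
next
  assume "\<forall>x\<in>set \<sigma>. x \<noteq> PI"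
  then show "pweight \<sigma> = length \<sigma>" unfolding pweight_def by simp
qed

lemma XYZ_iff: "q \<in> {PX,PY,PZ} \<longleftrightarrow> q \<noteq> PI"
  by (cases q) auto

lemma full_eq: "{\<sigma>\<in>pauli_strings n. pweight \<sigma> = n} = PT n (\<lambda>_. {PX,PY,PZ})"
proof (intro equalityI subsetI)
  fix \<sigma> assume "\<sigma> \<in> {\<sigma>\<in>pauli_strings n. pweight \<sigma> = n}"
  then have l: "length \<sigma> = n" and "pweight \<sigma> = length \<sigma>" by (auto simp: pauli_strings_def)
  then have "\<forall>x\<in>set \<sigma>. x \<noteq> PI" using pweight_full by blast
  then have "\<forall>l<n. \<sigma>!l \<noteq> PI" using l by (auto simp: nth_mem)
  then show "\<sigma> \<in> PT n (\<lambda>_. {PX,PY,PZ})" using l by (simp add: PT_def XYZ_iff del: insert_iff)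
next
  fix \<sigma> assume "\<sigma> \<in> PT n (\<lambda>_. {PX,PY,PZ})"
  then have l: "length \<sigma> = n" and a: "\<forall>l<n. \<sigma>!l \<noteq> PI" by (auto simp: PT_def XYZ_iff)
  then have "\<forall>x\<in>set \<sigma>. x \<noteq> PI" by (auto simp: in_set_conv_nth)
  then have "pweight \<sigma> = n" using pweight_full l by blast
  then show "\<sigma> \<in> {\<sigma>\<in>pauli_strings n. pweight \<sigma> = n}" using l by (auto simp: pauli_strings_def)
qed

lemma pweight_le: "pweight \<sigma> \<le> length \<sigma>"
  unfolding pweight_def by (rule length_filter_le)

definition hh :: "pauli \<Rightarrow> complex" where "hh q = (if q = PI then 3 else -1)"

lemma chi_XYZ: "chi {PX,PY,PZ} q = hh q"
  by (cases q) (simp_all add: chi_def comm_def hh_def)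

lemma chi_I: "chi {PI} q = 1"
  by (simp add: chi_def comm_def)

lemma pweight_Cons: "pweight (p#\<sigma>) = (if p = PI then 0 else 1) + pweight \<sigma>"
  by (simp add: pweight_def)

lemma prod_hh: "(\<Prod>l<length \<tau>. hh (\<tau>!l)) = 3^length \<tau> * (-1/3)^pweight \<tau>"
proof (induction \<tau>)
  case Nil
  then show ?case by (simp add: pweight_def)
next
  case (Cons p \<tau>)
  have "(\<Prod>l<length (p#\<tau>). hh ((p#\<tau>)!l)) = hh p * (\<Prod>l<length \<tau>. hh (\<tau>!l))"
    by (simp only: length_Cons prod.lessThan_Suc_shift nth_Cons_0 nth_Cons_Suc)
  also have "\<dots> = hh p * (3^length \<tau> * (-1/3)^pweight \<tau>)" using Cons.IH by simp
  also have "\<dots> = 3^length (p#\<tau>) * (-1/3)^pweight (p#\<tau>)"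
    by (cases "p = PI") (simp_all add: hh_def pweight_Cons)
  finally show ?case .
qed

lemma sum_inv_hh: "3 * (\<Sum>j<length \<tau>. (if \<tau>!j = PI then 1/3 else -1 :: complex)) = of_nat (length \<tau>) - 4 * of_nat (pweight \<tau>)"
proof (induction \<tau>)
  case Nil
  then show ?case by (simp add: pweight_def)
next
  case (Cons p \<tau>)
  have "3 * (\<Sum>j<length (p#\<tau>). (if (p#\<tau>)!j = PI then 1/3 else -1 :: complex))
     = 3 * (if p = PI then 1/3 else -1) + 3 * (\<Sum>j<length \<tau>. (if \<tau>!j = PI then 1/3 else -1 :: complex))"
    by (simp only: length_Cons sum.lessThan_Suc_shift nth_Cons_0 nth_Cons_Suc distrib_left)
  also have "\<dots> = of_nat (length (p#\<tau>)) - 4 * of_nat (pweight (p#\<tau>))"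
    unfolding Cons.IH by (cases "p = PI") (simp_all add: pweight_Cons algebra_simps)
  finally show ?case .
qed

definition Tj :: "nat \<Rightarrow> nat \<Rightarrow> pauli set" where
  "Tj j l = (if l = j then {PI} else {PX,PY,PZ})"

lemma prod_Tj: "j < length \<tau> \<Longrightarrow>
   (\<Prod>l<length \<tau>. chi (Tj j l) (\<tau>!l)) = (\<Prod>l<length \<tau>. hh (\<tau>!l)) * (if \<tau>!j = PI then 1/3 else -1)"
proof -
  assume j: "j < length \<tau>"
  let ?A = "{..<length \<tau>}"
  have "(\<Prod>l<length \<tau>. chi (Tj j l) (\<tau>!l)) = chi (Tj j j) (\<tau>!j) * (\<Prod>l\<in>?A-{j}. chi (Tj j l) (\<tau>!l))"
    by (rule prod.remove) (use j in auto)
  also have "\<dots> = (\<Prod>l\<in>?A-{j}. hh (\<tau>!l))"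
    by (simp add: Tj_def chi_I chi_XYZ)
  finally have 1: "(\<Prod>l<length \<tau>. chi (Tj j l) (\<tau>!l)) = (\<Prod>l\<in>?A-{j}. hh (\<tau>!l))" .
  have 2: "(\<Prod>l<length \<tau>. hh (\<tau>!l)) = hh (\<tau>!j) * (\<Prod>l\<in>?A-{j}. hh (\<tau>!l))"
    by (rule prod.remove) (use j in auto)
  show ?thesis unfolding 1 2 by (simp add: hh_def)
qed

lemma sum_Tj: "3 * (\<Sum>j<length \<tau>. \<Prod>l<length \<tau>. chi (Tj j l) (\<tau>!l))
   = 3^length \<tau> * (-1/3)^pweight \<tau> * (of_nat (length \<tau>) - 4 * of_nat (pweight \<tau>))"
proof -
  have "(\<Sum>j<length \<tau>. \<Prod>l<length \<tau>. chi (Tj j l) (\<tau>!l))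
      = (\<Sum>j<length \<tau>. (\<Prod>l<length \<tau>. hh (\<tau>!l)) * (if \<tau>!j = PI then 1/3 else -1))"
    by (rule sum.cong[OF refl]) (simp add: prod_Tj)
  also have "\<dots> = (\<Prod>l<length \<tau>. hh (\<tau>!l)) * (\<Sum>j<length \<tau>. (if \<tau>!j = PI then 1/3 else -1))"
    by (simp add: sum_distrib_left)
  finally have "3 * (\<Sum>j<length \<tau>. \<Prod>l<length \<tau>. chi (Tj j l) (\<tau>!l))
     = (\<Prod>l<length \<tau>. hh (\<tau>!l)) * (3 * (\<Sum>j<length \<tau>. (if \<tau>!j = PI then 1/3 else -1)))"
    by (simp add: mult_ac)
  then show ?thesis unfolding sum_inv_hh prod_hh .
qed


lemma regroup:
  fixes F :: "nat \<Rightarrow> complex" and a :: "pauli list \<Rightarrow> complex"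
  shows "(\<Sum>i=0..n. F i * (c * (\<Sum>\<tau>\<in>{\<tau>\<in>PT n (\<lambda>_. UNIV). pweight \<tau> = i}. a \<tau>)))
     = c * (\<Sum>\<tau>\<in>PT n (\<lambda>_. UNIV). F (pweight \<tau>) * a \<tau>)"
proof -
  have "(\<Sum>i=0..n. F i * (c * (\<Sum>\<tau>\<in>{\<tau>\<in>PT n (\<lambda>_. UNIV). pweight \<tau> = i}. a \<tau>)))
     = c * (\<Sum>i\<in>{0..n}. \<Sum>\<tau>\<in>{\<tau>\<in>PT n (\<lambda>_. UNIV). pweight \<tau> = i}. F (pweight \<tau>) * a \<tau>)"
    by (simp add: sum_distrib_left mult_ac)
  also have "(\<Sum>i\<in>{0..n}. \<Sum>\<tau>\<in>{\<tau>\<in>PT n (\<lambda>_. UNIV). pweight \<tau> = i}. F (pweight \<tau>) * a \<tau>)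
      = (\<Sum>\<tau>\<in>PT n (\<lambda>_. UNIV). F (pweight \<tau>) * a \<tau>)"
  proof (rule sum.group)
    show "finite (PT n (\<lambda>_. UNIV))" by (rule finite_PT)
    show "finite {0..n}" by simp
    show "pweight ` PT n (\<lambda>_. UNIV) \<subseteq> {0..n}"
      using pweight_le by (force simp: PT_def)
  qed
  finally show ?thesis .
qed

theorem proposition7:
  fixes n k :: nat and S :: "complex mat set" and P :: "complex mat"
  assumes "stabilizer_code n k S"
    and "orth_projector_onto n P (codespace n S)"
    and "\<forall>i. SL_A n k P (2 * i + 1) = 0"
  shows "(\<Sum>i=0..n. of_nat i * (1 / 3 ^ i) * SL_A n k P i)
           \<le> of_nat n / 4 * (2 ^ (n - k) / 3 ^ n) * SL_B n k P n"
proof -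
  have kn: "k \<le> n" using assms(1) by (simp add: stabilizer_code_def)
  have Pc: "P \<in> carrier_mat (2^n) (2^n)" and PP: "P*P = P" and Padj: "mat_adjoint P = P"
    using assms(2) by (auto simp: orth_projector_onto_def)
  define c where "c = (1 / 2^(2*k) :: complex)"
  define a where "a = (\<lambda>\<tau>. mtrace (sm n \<tau> * P) * mtrace (sm n \<tau> * P))"
  define b where "b = (\<lambda>\<sigma>. mtrace (sm n \<sigma> * P * sm n \<sigma> * P))"
  define g where "g = (\<lambda>\<tau>. (-1/3 :: complex) ^ pweight \<tau>)"
  let ?PS = "PT n (\<lambda>_. UNIV)"
  have SLA: "\<And>i. SL_A n k P i = c * (\<Sum>\<tau>\<in>{\<tau>\<in>?PS. pweight \<tau> = i}. a \<tau>)"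
    by (simp add: SL_A_def c_def a_def psm_adj PS_eq)
  have SLB: "SL_B n k P n = 1/2^k * (\<Sum>\<sigma>\<in>PT n (\<lambda>_. {PX,PY,PZ}). b \<sigma>)"
    unfolding SL_B_def full_eq by (simp add: b_def psm_adj)
  have lenPS: "\<And>\<tau>. \<tau> \<in> ?PS \<Longrightarrow> length \<tau> = n" by (simp add: PT_def)
  have LHS: "(\<Sum>i=0..n. of_nat i * (1 / 3 ^ i) * SL_A n k P i)
      = c * (\<Sum>\<tau>\<in>?PS. (of_nat (pweight \<tau>) * g \<tau>) * a \<tau>)"
  proof -
    have "(\<Sum>i=0..n. of_nat i * (1 / 3 ^ i) * SL_A n k P i)
       = (\<Sum>i=0..n. (of_nat i * (-1/3)^i) * SL_A n k P i)"
    proof (rule sum.cong[OF refl])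
      fix i assume "i \<in> {0..n}"
      show "of_nat i * (1 / 3 ^ i) * SL_A n k P i = (of_nat i * (-1/3)^i) * SL_A n k P i"
      proof (cases "even i")
        case True
        then have "(-1/3 :: complex)^i = (1/3)^i" by (simp add: power_divide)
        then show ?thesis by (simp add: power_divide)
      next
        case False
        then have "i = 2 * (i div 2) + 1" by presburger
        then have "SL_A n k P i = 0" using assms(3) by metis
        then show ?thesis by simp
      qed
    qed
    also have "\<dots> = c * (\<Sum>\<tau>\<in>?PS. (of_nat (pweight \<tau>) * g \<tau>) * a \<tau>)"
      unfolding SLA g_def by (rule regroup)
    finally show ?thesis .
  qed
  have keyF: "2^n * (\<Sum>\<sigma>\<in>PT n (\<lambda>_. {PX,PY,PZ}). b \<sigma>) = (\<Sum>\<tau>\<in>?PS. a \<tau> * (3^n * g \<tau>))"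
  proof -
    have "2^n * (\<Sum>\<sigma>\<in>PT n (\<lambda>_. {PX,PY,PZ}). b \<sigma>) = (\<Sum>\<tau>\<in>?PS. a \<tau> * (\<Prod>l<n. chi {PX,PY,PZ} (\<tau>!l)))"
      unfolding a_def b_def by (rule key[OF Pc])
    also have "\<dots> = (\<Sum>\<tau>\<in>?PS. a \<tau> * (3^n * g \<tau>))"
    proof (rule sum.cong[OF refl])
      fix \<tau> assume t: "\<tau> \<in> ?PS"
      have "(\<Prod>l<n. chi {PX,PY,PZ} (\<tau>!l)) = 3^n * g \<tau>"
        using prod_hh[of \<tau>] lenPS[OF t] by (simp add: chi_XYZ g_def)
      then show "a \<tau> * (\<Prod>l<n. chi {PX,PY,PZ} (\<tau>!l)) = a \<tau> * (3^n * g \<tau>)" by simp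
    qed
    finally show ?thesis .
  qed
  have const: "(of_nat n / 4 * (2 ^ (n - k) / 3 ^ n) * (1/2^k) :: complex) = of_nat n / 4 * c / 3^n * 2^n"
  proof -
    have e: "(2::complex)^n = 2^(n-k) * 2^k" using kn by (simp add: power_add[symmetric])
    have "(2::complex)^(2*k) = 2^k * 2^k" by (simp add: mult_2 power_add)
    then show ?thesis unfolding c_def e by (simp add: field_simps)
  qed
  have RHS: "of_nat n / 4 * (2 ^ (n - k) / 3 ^ n) * SL_B n k P n
      = c * (\<Sum>\<tau>\<in>?PS. (of_nat n / 4 * g \<tau>) * a \<tau>)"
  proof -
    have "of_nat n / 4 * (2 ^ (n - k) / 3 ^ n) * SL_B n k P n
       = (of_nat n / 4 * (2 ^ (n - k) / 3 ^ n) * (1/2^k)) * (\<Sum>\<sigma>\<in>PT n (\<lambda>_. {PX,PY,PZ}). b \<sigma>)"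
      unfolding SLB by (simp only: mult.assoc)
    also have "\<dots> = of_nat n / 4 * c / 3^n * (2^n * (\<Sum>\<sigma>\<in>PT n (\<lambda>_. {PX,PY,PZ}). b \<sigma>))"
      unfolding const by (simp only: mult.assoc)
    also have "\<dots> = of_nat n / 4 * c / 3^n * (\<Sum>\<tau>\<in>?PS. a \<tau> * (3^n * g \<tau>))"
      unfolding keyF ..
    also have "\<dots> = (\<Sum>\<tau>\<in>?PS. c * ((of_nat n / 4 * g \<tau>) * a \<tau>))"
      unfolding sum_distrib_left by (rule sum.cong[OF refl]) (simp add: field_simps)
    also have "\<dots> = c * (\<Sum>\<tau>\<in>?PS. (of_nat n / 4 * g \<tau>) * a \<tau>)"
      by (simp add: sum_distrib_left)
    finally show ?thesis .
  qed
  define D where "D = c * (3 / (4 * 3^n)) * (\<Sum>j<n. 2^n * (\<Sum>\<sigma>\<in>PT n (Tj j). b \<sigma>))"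
  have keyj: "\<And>j. 2^n * (\<Sum>\<sigma>\<in>PT n (Tj j). b \<sigma>) = (\<Sum>\<tau>\<in>?PS. a \<tau> * (\<Prod>l<n. chi (Tj j l) (\<tau>!l)))"
    unfolding a_def b_def by (rule key[OF Pc])
  have per: "\<And>\<tau>. \<tau> \<in> ?PS \<Longrightarrow> (of_nat n / 4 - of_nat (pweight \<tau>)) * g \<tau>
      = 3 / (4 * 3^n) * (\<Sum>j<n. \<Prod>l<n. chi (Tj j l) (\<tau>!l))"
  proof -
    fix \<tau> assume t: "\<tau> \<in> ?PS"
    have l: "length \<tau> = n" using lenPS[OF t] .
    have "3 / (4 * 3^n) * (\<Sum>j<n. \<Prod>l<n. chi (Tj j l) (\<tau>!l))
        = 1 / (4 * 3^n) * (3 * (\<Sum>j<n. \<Prod>l<n. chi (Tj j l) (\<tau>!l)))"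
      by simp
    also have "\<dots> = 1 / (4 * 3^n) * (3^n * g \<tau> * (of_nat n - 4 * of_nat (pweight \<tau>)))"
      unfolding sum_Tj[of \<tau>, unfolded l] g_def ..
    also have "\<dots> = (of_nat n / 4 - of_nat (pweight \<tau>)) * g \<tau>"
      by (simp add: field_simps)
    finally show "(of_nat n / 4 - of_nat (pweight \<tau>)) * g \<tau>
      = 3 / (4 * 3^n) * (\<Sum>j<n. \<Prod>l<n. chi (Tj j l) (\<tau>!l))" by simp
  qed
  have diff: "of_nat n / 4 * (2 ^ (n - k) / 3 ^ n) * SL_B n k P n - (\<Sum>i=0..n. of_nat i * (1 / 3 ^ i) * SL_A n k P i) = D"
  proof -
    have "of_nat n / 4 * (2 ^ (n - k) / 3 ^ n) * SL_B n k P n - (\<Sum>i=0..n. of_nat i * (1 / 3 ^ i) * SL_A n k P i)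
        = c * (\<Sum>\<tau>\<in>?PS. ((of_nat n / 4 - of_nat (pweight \<tau>)) * g \<tau>) * a \<tau>)"
      unfolding RHS LHS by (simp add: sum_subtractf[symmetric] right_diff_distrib[symmetric] left_diff_distrib)
    also have "\<dots> = c * (\<Sum>\<tau>\<in>?PS. (3 / (4 * 3^n) * (\<Sum>j<n. \<Prod>l<n. chi (Tj j l) (\<tau>!l))) * a \<tau>)"
      by (rule arg_cong[where f="\<lambda>x. c * x"], rule sum.cong[OF refl]) (simp add: per)
    also have "\<dots> = c * (3 / (4 * 3^n)) * (\<Sum>j<n. \<Sum>\<tau>\<in>?PS. a \<tau> * (\<Prod>l<n. chi (Tj j l) (\<tau>!l)))"
    proof -
      have "(\<Sum>\<tau>\<in>?PS. (3 / (4 * 3^n) * (\<Sum>j<n. \<Prod>l<n. chi (Tj j l) (\<tau>!l))) * a \<tau>)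
          = (\<Sum>\<tau>\<in>?PS. \<Sum>j<n. 3 / (4 * 3^n) * (a \<tau> * (\<Prod>l<n. chi (Tj j l) (\<tau>!l))))"
        by (rule sum.cong[OF refl]) (simp add: sum_distrib_left sum_distrib_right mult_ac)
      also have "\<dots> = (\<Sum>j<n. \<Sum>\<tau>\<in>?PS. 3 / (4 * 3^n) * (a \<tau> * (\<Prod>l<n. chi (Tj j l) (\<tau>!l))))"
        by (rule sum.swap)
      also have "\<dots> = 3 / (4 * 3^n) * (\<Sum>j<n. \<Sum>\<tau>\<in>?PS. a \<tau> * (\<Prod>l<n. chi (Tj j l) (\<tau>!l)))"
        by (simp only: sum_distrib_left)
      finally show ?thesis by (simp only: mult.assoc)
    qed
    also have "\<dots> = D" unfolding D_def keyj ..
    finally show ?thesis .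
  qed
  have c0: "0 \<le> c * (3 / (4 * 3^n))"
  proof -
    have "c * (3 / (4 * 3^n)) = complex_of_real (1 / 2^(2*k) * (3 / (4 * 3^n)))"
      unfolding c_def by simp
    then show ?thesis by (simp add: less_eq_complex_def)
  qed
  have bnn: "\<And>j. 0 \<le> 2^n * (\<Sum>\<sigma>\<in>PT n (Tj j). b \<sigma>)"
  proof -
    fix j
    have "0 \<le> (2::complex)^n" by (simp add: less_eq_complex_def)
    moreover have "0 \<le> (\<Sum>\<sigma>\<in>PT n (Tj j). b \<sigma>)"
      unfolding b_def by (rule sum_nonneg, rule b_nonneg[OF psm_carrier psm_adj Pc PP Padj])
    ultimately show "0 \<le> 2^n * (\<Sum>\<sigma>\<in>PT n (Tj j). b \<sigma>)" by (rule mult_nonneg_nonneg)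
  qed
  have "0 \<le> D" unfolding D_def
    by (rule mult_nonneg_nonneg[OF c0], rule sum_nonneg, rule bnn)
  then have "0 \<le> of_nat n / 4 * (2 ^ (n - k) / 3 ^ n) * SL_B n k P n - (\<Sum>i=0..n. of_nat i * (1 / 3 ^ i) * SL_A n k P i)"
    unfolding diff .
  then show ?thesis by (simp only: diff_ge_0_iff_ge)
qed

end
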